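(* Let $\Omega=\{z\in\mathbb{C}:|z|=1\}$ and, for $|\psi|<1$, let $BC_+(\psi)$ and $BC_-(\psi)$ be the distributions on $\Omega\times\Omega$ with densities $\frac{1}{4\pi^2}\frac{1-|\psi|^2}{|1-\psi z_v\overline{z_u}|^2}$ and $\frac{1}{4\pi^2}\frac{1-|\psi|^2}{|1-\psi z_v z_u|^2}$ respectively. These distributions are infinitely divisible with respect to componentwise multiplication: if $(Z_U,Z_V)\sim BC_\pm(\psi)$, then for every positive integer $n$, if $(Z_{Uj},Z_{Vj})$, $j=1,\dots,n$, are i.i.d. from $BC_\pm(\sqrt[n]{\psi})$ (same sign), where $\sqrt[n]{\psi}$ is an $n$-th root of $\psi$, then $\left(\prod_{j=1}^nZ_{Uj},\prod_{j=1}^nZ_{Vj}\right)\stackrel{d}{=}(Z_U,Z_V)$.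
   Context: Densities are with respect to arc-length measure on each circle. *)

theory Defs
  imports "HOL-Probability.Probability"
begin

definition circle_measure :: "complex measure" where
  "circle_measure = distr (restrict_space lborel {0..<2*pi}) borel cis"

text \<open>Density of BC_+(psi) (s = True) and BC_-(psi) (s = False) at (z_u, z_v).\<close>
definition BC_density :: "bool \<Rightarrow> complex \<Rightarrow> complex \<times> complex \<Rightarrow> real" where
  "BC_density s psi = (\<lambda>(zu, zv).
     1 / (4 * pi\<^sup>2) * (1 - (cmod psi)\<^sup>2) /
       (cmod (1 - psi * zv * (if s then cnj zu else zu)))\<^sup>2)"

definition BC :: "bool \<Rightarrow> complex \<Rightarrow> (complex \<times> complex) measure" where
  "BC s psi = density (circle_measure \<Otimes>\<^sub>M circle_measure)
                (\<lambda>z. ennreal (BC_density s psi z))"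

end

theory Submission
  imports Defs
begin


definition torus :: "(complex \<times> complex) set" where
  "torus = {z. cmod (fst z) = 1 \<and> cmod (snd z) = 1}"

definition mono2 :: "int \<Rightarrow> int \<Rightarrow> complex \<times> complex \<Rightarrow> complex" where
  "mono2 j k z = fst z powi j * snd z powi k"

definition lsum :: "(complex \<times> int \<times> int) list \<Rightarrow> complex \<times> complex \<Rightarrow> complex" where
  "lsum xs z = (\<Sum>(c,j,k)\<leftarrow>xs. c * mono2 j k z)"

definition laurent :: "(complex \<times> complex \<Rightarrow> real) \<Rightarrow> bool" where
  "laurent g \<longleftrightarrow> (\<exists>xs. \<forall>z\<in>torus. complex_of_real (g z) = lsum xs z)"

lemma lsum_append: "lsum (xs @ ys) z = lsum xs z + lsum ys z"
  by (simp add: lsum_def)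

definition lmul :: "(complex \<times> int \<times> int) list \<Rightarrow> (complex \<times> int \<times> int) list \<Rightarrow> (complex \<times> int \<times> int) list" where
  "lmul xs ys = concat (map (\<lambda>(c,j,k). map (\<lambda>(d,l,m). (c*d, j+l, k+m)) ys) xs)"

lemma mono2_add: assumes z: "z \<in> torus" shows "mono2 (j+l) (k+m) z = mono2 j k z * mono2 l m z"
proof -
  have "fst z \<noteq> 0" "snd z \<noteq> 0" using z by (auto simp: torus_def)
  then show ?thesis by (simp add: mono2_def power_int_add algebra_simps)
qed

lemma lsum_lmul: "z \<in> torus \<Longrightarrow> lsum (lmul xs ys) z = lsum xs z * lsum ys z"
proof (induction xs)
  case Nil then show ?case by (simp add: lsum_def lmul_def)
next
  case (Cons a xs)
  obtain c j k where a: "a = (c,j,k)" by (cases a) auto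
  have "lsum (map (\<lambda>(d,l,m). (c*d, j+l, k+m)) ys) z = c * mono2 j k z * lsum ys z"
    using Cons.prems
    by (induction ys) (auto simp: lsum_def mono2_add algebra_simps)
  then show ?case using Cons
    by (simp add: a lmul_def lsum_append) (simp add: lsum_def algebra_simps)
qed

lemma laurent_const: "laurent (\<lambda>z. c)"
  unfolding laurent_def
  by (rule exI[of _ "[(complex_of_real c,0,0)]"]) (simp add: lsum_def mono2_def)

lemma laurent_add: "laurent f \<Longrightarrow> laurent g \<Longrightarrow> laurent (\<lambda>z. f z + g z)"
  unfolding laurent_def
  by (metis lsum_append of_real_add)

lemma laurent_mult: "laurent f \<Longrightarrow> laurent g \<Longrightarrow> laurent (\<lambda>z. f z * g z)"
  unfolding laurent_def
  by (metis lsum_lmul of_real_mult)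

lemma circle_inv: "cmod u = 1 \<Longrightarrow> u powi -1 = cnj u"
proof -
  assume u: "cmod u = 1"
  have "u * cnj u = 1" using complex_norm_square[of u] u by simp
  then show ?thesis by (simp add: power_int_minus inverse_unique)
qed

lemma circle_Re: assumes "cmod u = 1" shows "complex_of_real (Re u) = (u + u powi -1) / 2"
  unfolding circle_inv[OF assms] using complex_add_cnj[of u] by simp

lemma circle_Im: assumes "cmod u = 1" shows "complex_of_real (Im u) = (u - u powi -1) / (2*\<i>)"
  unfolding circle_inv[OF assms] using complex_diff_cnj[of u] by (simp add: field_simps)

lemma lin_ident:
  fixes x1 y1 x2 y2 a1 b1 a2 b2 :: complex
  shows "((x1 + y1)/2) * a1 + ((x1 - y1)/(2*\<i>)) * b1 + ((x2 + y2)/2) * a2 + ((x2 - y2)/(2*\<i>)) * b2 =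
   (a1/2)*x1 + ((a1/2)*y1 + ((b1/(2*\<i>))*x1 + ((-b1/(2*\<i>))*y1 + ((a2/2)*x2 + ((a2/2)*y2 + ((b2/(2*\<i>))*x2 + ((-b2/(2*\<i>))*y2 + 0)))))))"
  by (simp add: add_divide_distrib diff_divide_distrib algebra_simps)

lemma laurent_linear:
  assumes f: "bounded_linear f" shows "laurent f"
proof -
  have dec: "f (u,v) = Re u * f (1,0) + Im u * f (\<i>,0) + Re v * f (0,1) + Im v * f (0,\<i>)" for u v
  proof -
    have "(u,v) = Re u *\<^sub>R (1,0) + Im u *\<^sub>R (\<i>,0) + Re v *\<^sub>R (0,1) + Im v *\<^sub>R (0,\<i>)"
      by (simp add: complex_eq_iff scaleR_prod_def)
    then have "f (u,v) = f (Re u *\<^sub>R (1,0) + Im u *\<^sub>R (\<i>,0) + Re v *\<^sub>R (0,1) + Im v *\<^sub>R (0,\<i>))"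
      by (rule arg_cong)
    also have "\<dots> = Re u * f (1,0) + Im u * f (\<i>,0) + Re v * f (0,1) + Im v * f (0,\<i>)"
      using f by (simp only: linear_add[OF bounded_linear.linear[OF f]] linear_scale[OF bounded_linear.linear[OF f]] real_scaleR_def)
    finally show ?thesis .
  qed
  define a where "a = complex_of_real (f (1,0))"
  define b where "b = complex_of_real (f (\<i>,0))"
  define c where "c = complex_of_real (f (0,1))"
  define d where "d = complex_of_real (f (0,\<i>))"
  let ?xs = "[(a/2,1,0),(a/2,-1,0),(b/(2*\<i>),1,0),(-b/(2*\<i>),-1,0),
              (c/2,0,1),(c/2,0,-1),(d/(2*\<i>),0,1),(-d/(2*\<i>),0,-1)]"
  show ?thesis unfolding laurent_def
  proof (intro exI[of _ ?xs] ballI)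
    fix z assume z: "z \<in> torus"
    obtain u v where zz: "z = (u,v)" by (cases z)
    have u: "cmod u = 1" and v: "cmod v = 1" using z by (auto simp: zz torus_def)
    have "complex_of_real (f z) = of_real (Re u) * a + of_real (Im u) * b + of_real (Re v) * c + of_real (Im v) * d"
      unfolding zz by (subst dec) (simp add: a_def b_def c_def d_def)
    also have "\<dots> = (u + u powi -1)/2 * a + (u - u powi -1)/(2*\<i>) * b + (v + v powi -1)/2 * c + (v - v powi -1)/(2*\<i>) * d"
      by (simp only: circle_Re[OF u] circle_Im[OF u] circle_Re[OF v] circle_Im[OF v])
    also have "\<dots> = lsum ?xs z"
      unfolding zz lin_ident lsum_def mono2_def by simp
    finally show "complex_of_real (f z) = lsum ?xs z" .
  qed
qed

lemma laurent_poly: "real_polynomial_function f \<Longrightarrow> laurent f"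
  by (induction rule: real_polynomial_function.induct)
     (auto intro: laurent_linear laurent_const laurent_add laurent_mult)


lemma torus_compact: "compact torus"
proof -
  have "torus = sphere (0::complex) 1 \<times> sphere (0::complex) 1"
    by (auto simp: torus_def)
  moreover have "compact (sphere (0::complex) 1 \<times> sphere (0::complex) 1)"
    by (intro compact_Times compact_sphere)
  ultimately show ?thesis by simp
qed

lemma mono2_measurable[measurable]: "mono2 j k \<in> borel_measurable borel"
proof -
  have pm: "(\<lambda>x::complex. x powi j) \<in> borel_measurable borel" for j
  proof (cases "0 \<le> j")
    case True
    have "(\<lambda>x::complex. x ^ nat j) \<in> borel_measurable borel" by measurable
    then show ?thesis using True by (simp add: power_int_def)
  next
    case False
    have "(\<lambda>x::complex. inverse x ^ nat (-j)) \<in> borel_measurable borel" by measurable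
    then show ?thesis using False by (simp add: power_int_def)
  qed
  have cf: "continuous_on UNIV (fst :: complex \<times> complex \<Rightarrow> complex)"
    by (intro continuous_intros)
  have cs: "continuous_on UNIV (snd :: complex \<times> complex \<Rightarrow> complex)"
    by (intro continuous_intros)
  have 1: "(\<lambda>z::complex \<times> complex. fst z powi j) \<in> borel_measurable borel"
    using measurable_compose[OF borel_measurable_continuous_onI[OF cf] pm] by (simp add: o_def)
  have 2: "(\<lambda>z::complex \<times> complex. snd z powi k) \<in> borel_measurable borel"
    using measurable_compose[OF borel_measurable_continuous_onI[OF cs] pm] by (simp add: o_def)
  show ?thesis unfolding mono2_def using 1 2 by measurable
qed

lemma mono2_bound: "z \<in> torus \<Longrightarrow> norm (mono2 j k z) = 1"
  by (auto simp: torus_def mono2_def norm_mult norm_power_int)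

locale torus_meas =
  fixes M :: "(complex \<times> complex) measure"
  assumes fin: "finite_measure M" and sets_M: "sets M = sets borel"
    and AE_M: "AE z in M. z \<in> torus"
begin

lemma space_M: "space M = UNIV"
  using sets_eq_imp_space_eq[OF sets_M] by simp

lemma meas_M: "f \<in> borel_measurable borel \<Longrightarrow> f \<in> borel_measurable M"
  using measurable_cong_sets[OF sets_M refl] by blast

lemma integrable_M:
  fixes f :: "complex \<times> complex \<Rightarrow> 'b::{banach, second_countable_topology}"
  assumes f: "f \<in> borel_measurable borel" and B: "\<And>z. z \<in> torus \<Longrightarrow> norm (f z) \<le> B"
  shows "integrable M f"
proof (rule Bochner_Integration.integrable_bound[where f="\<lambda>_. B"])
  show "integrable M (\<lambda>_. B)" using finite_measure.integrable_const[OF fin] .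
  show "f \<in> borel_measurable M" using meas_M[OF f] .
  show "AE x in M. norm (f x) \<le> norm B"
    using AE_M by eventually_elim (use B in force)
qed

lemma integrable_mono2: "integrable M (mono2 j k)"
  by (rule integrable_M[where B=1]) (auto simp: mono2_bound)

lemma integrable_cont:
  fixes f :: "complex \<times> complex \<Rightarrow> real"
  assumes "continuous_on UNIV f" shows "integrable M f"
proof -
  have "compact (f ` torus)"
    by (rule compact_continuous_image[OF continuous_on_subset[OF assms subset_UNIV] torus_compact])
  then have "bounded (f ` torus)" by (rule compact_imp_bounded)
  then obtain B where B: "\<forall>x\<in>f ` torus. norm x \<le> B" by (auto simp: bounded_iff)
  then have "\<And>z. z \<in> torus \<Longrightarrow> norm (f z) \<le> B" by auto
  then show ?thesis
    using integrable_M[of f B] borel_measurable_continuous_onI[OF assms] by blast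
qed

lemma integral_lsum: "integrable M (lsum xs) \<and> integral\<^sup>L M (lsum xs) = (\<Sum>(c,j,k)\<leftarrow>xs. c * integral\<^sup>L M (mono2 j k))"
proof (induction xs)
  case Nil then show ?case by (simp add: lsum_def)
next
  case (Cons a xs)
  obtain c j k where a: "a = (c,j,k)" by (cases a) auto
  have e: "lsum (a # xs) = (\<lambda>z. c * mono2 j k z + lsum xs z)"
    by (auto simp: a lsum_def)
  show ?case unfolding e using Cons integrable_mono2[of j k]
    by (simp add: a)
qed

end

lemma torus_meas_integral_eq:
  assumes M: "torus_meas M" and N: "torus_meas N"
    and mom: "\<And>j k. integral\<^sup>L M (mono2 j k) = integral\<^sup>L N (mono2 j k)"
    and f: "continuous_on UNIV f"
  shows "integral\<^sup>L M f = integral\<^sup>L N (f :: complex \<times> complex \<Rightarrow> real)"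
proof -
  interpret M: torus_meas M by fact
  interpret N: torus_meas N by fact
  interpret Mf: finite_measure M by (rule M.fin)
  interpret Nf: finite_measure N by (rule N.fin)
  have lau: "integral\<^sup>L M g = integral\<^sup>L N g" if g: "laurent g" and gc: "continuous_on UNIV g" for g
  proof -
    obtain xs where xs: "\<And>z. z \<in> torus \<Longrightarrow> complex_of_real (g z) = lsum xs z"
      using g unfolding laurent_def by blast
    have ce: "complex_of_real (integral\<^sup>L K g) = integral\<^sup>L K (lsum xs)" if K: "torus_meas K" for K
    proof -
      interpret K: torus_meas K by fact
      have gm: "g \<in> borel_measurable K" by (rule borel_measurable_integrable[OF K.integrable_cont[OF gc]])
      then have gm': "(\<lambda>z. complex_of_real (g z)) \<in> borel_measurable K" by measurable
      have lm: "lsum xs \<in> borel_measurable K"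
        using K.integral_lsum[of xs] borel_measurable_integrable by blast
      have ae: "AE z in K. complex_of_real (g z) = lsum xs z"
        using K.AE_M by eventually_elim (rule xs)
      show ?thesis
        unfolding integral_complex_of_real[symmetric] by (rule integral_cong_AE[OF gm' lm ae])
    qed
    have "complex_of_real (integral\<^sup>L M g) = integral\<^sup>L M (lsum xs)" by (rule ce[OF M])
    also have "\<dots> = (\<Sum>(c,j,k)\<leftarrow>xs. c * integral\<^sup>L M (mono2 j k))" using M.integral_lsum by blast
    also have "\<dots> = (\<Sum>(c,j,k)\<leftarrow>xs. c * integral\<^sup>L N (mono2 j k))" by (simp add: mom)
    also have "\<dots> = integral\<^sup>L N (lsum xs)" using N.integral_lsum by metis
    also have "\<dots> = complex_of_real (integral\<^sup>L N g)" by (rule ce[OF N, symmetric])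
    finally show ?thesis by simp
  qed
  define C where "C = measure M UNIV + measure N UNIV + 1"
  have C: "C > 0" unfolding C_def by (simp add: add_nonneg_pos)
  have approx: "\<bar>integral\<^sup>L M f - integral\<^sup>L N f\<bar> \<le> e * C" if e: "e > 0" for e
  proof -
    obtain g where g: "polynomial_function g" and ge: "\<And>z. z \<in> torus \<Longrightarrow> norm (f z - g z) < e"
      using Stone_Weierstrass_polynomial_function[OF torus_compact continuous_on_subset[OF f] e] by blast
    have gr: "real_polynomial_function g" using g real_polynomial_function_eq by blast
    have gc: "continuous_on UNIV g" using continuous_on_polymonial_function[OF g] .
    have fg: "continuous_on UNIV (\<lambda>z. f z - g z)" using f gc by (intro continuous_intros)
    have bnd: "\<bar>integral\<^sup>L K f - integral\<^sup>L K g\<bar> \<le> e * measure K UNIV" if K: "torus_meas K" for K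
    proof -
      interpret K: torus_meas K by fact
      interpret Kf: finite_measure K by (rule K.fin)
      have "\<bar>integral\<^sup>L K f - integral\<^sup>L K g\<bar> = \<bar>integral\<^sup>L K (\<lambda>z. f z - g z)\<bar>"
        using K.integrable_cont[OF f] K.integrable_cont[OF gc] by simp
      also have "\<dots> \<le> integral\<^sup>L K (\<lambda>z. \<bar>f z - g z\<bar>)"
        by (rule integral_abs_bound)
      also have "\<dots> \<le> integral\<^sup>L K (\<lambda>z. e)"
        using K.AE_M ge K.integrable_cont[OF fg]
        by (intro integral_mono_AE) (auto elim!: eventually_mono simp: less_imp_le)
      also have "\<dots> = e * measure K UNIV" by (simp add: K.space_M)
      finally show ?thesis .
    qed
    have "\<bar>integral\<^sup>L M f - integral\<^sup>L N f\<bar> \<le> \<bar>integral\<^sup>L M f - integral\<^sup>L M g\<bar> + \<bar>integral\<^sup>L N f - integral\<^sup>L N g\<bar>"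
      using lau[OF laurent_poly[OF gr] gc] by linarith
    also have "\<dots> \<le> e * measure M UNIV + e * measure N UNIV"
      using bnd[OF M] bnd[OF N] by linarith
    also have "\<dots> \<le> e * C" using e unfolding C_def by (simp add: algebra_simps)
    finally show ?thesis .
  qed
  have "\<bar>integral\<^sup>L M f - integral\<^sup>L N f\<bar> \<le> 0"
  proof (rule field_le_epsilon)
    fix e :: real assume "e > 0"
    then show "\<bar>integral\<^sup>L M f - integral\<^sup>L N f\<bar> \<le> 0 + e"
      using approx[of "e / C"] C by simp
  qed
  then show ?thesis by simp
qed

lemma torus_meas_eq:
  assumes M: "torus_meas M" and N: "torus_meas N"
    and mom: "\<And>j k. integral\<^sup>L M (mono2 j k) = integral\<^sup>L N (mono2 j k)"
  shows "M = N"
proof -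
  interpret M: torus_meas M by fact
  interpret N: torus_meas N by fact
  interpret Mf: finite_measure M by (rule M.fin)
  interpret Nf: finite_measure N by (rule N.fin)
  have closed_eq: "emeasure M S = emeasure N S" if S: "closed S" for S
  proof (cases "S = {}")
    case True then show ?thesis by simp
  next
    case False
    define h where "h k x = max 0 (1 - real k * infdist x S)" for k :: nat and x
    have hc: "continuous_on UNIV (h k)" for k
      unfolding h_def by (intro continuous_intros)
    have lim: "(\<lambda>k. h k x) \<longlonglongrightarrow> indicator S x" for x
    proof (cases "x \<in> S")
      case True
      then have "infdist x S = 0" by (simp add: infdist_zero)
      then show ?thesis using True by (simp add: h_def)
    next
      case xS: False
      have d: "infdist x S > 0"
        using in_closed_iff_infdist_zero[OF S False] xS infdist_nonneg[of x S] by auto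
      obtain N0 :: nat where N0: "1 / infdist x S < N0" using reals_Archimedean2 by blast
      have "eventually (\<lambda>k. h k x = 0) sequentially"
        unfolding eventually_sequentially
      proof (intro exI allI impI)
        fix k assume "N0 \<le> k"
        then have "1 / infdist x S < real k" using N0 by linarith
        then have "1 < real k * infdist x S" using d by (simp add: field_simps)
        then show "h k x = 0" by (simp add: h_def)
      qed
      then show ?thesis using xS by (simp add: tendsto_eventually)
    qed
    have hb: "norm (h k x) \<le> 1" for k x
      unfolding h_def using infdist_nonneg[of x S] by auto
    have ind_meas: "indicator S \<in> borel_measurable borel"
      using S by (intro borel_measurable_indicator) (simp add: borel_closed)
    have conv: "(\<lambda>k. integral\<^sup>L K (h k)) \<longlonglongrightarrow> integral\<^sup>L K (indicator S)" if K: "torus_meas K" for K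
    proof -
      interpret K: torus_meas K by fact
      interpret Kf: finite_measure K by (rule K.fin)
      show ?thesis
        by (rule integral_dominated_convergence[where w="\<lambda>_. 1"])
           (use K.meas_M[OF ind_meas] K.meas_M[OF borel_measurable_continuous_onI[OF hc]] lim hb in auto)
    qed
    have "integral\<^sup>L M (h k) = integral\<^sup>L N (h k)" for k
      by (rule torus_meas_integral_eq[OF M N mom hc])
    then have "integral\<^sup>L M (indicator S) = integral\<^sup>L N (indicator S :: _ \<Rightarrow> real)"
      using LIMSEQ_unique[OF conv[OF M]] conv[OF N] by simp
    moreover have "S \<in> sets M" "S \<in> sets N" using S by (simp_all add: M.sets_M N.sets_M borel_closed)
    ultimately show ?thesis
      by (simp add: Mf.emeasure_eq_measure Nf.emeasure_eq_measure)
  qed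
  show ?thesis
  proof (rule measure_eqI_generator_eq[where E="Collect closed" and \<Omega>=UNIV and A="\<lambda>_. UNIV"])
    show "Int_stable (Collect closed)" by (auto simp: Int_stable_def)
    show "Collect closed \<subseteq> Pow UNIV" by simp
    show "\<And>X. X \<in> Collect closed \<Longrightarrow> emeasure M X = emeasure N X" using closed_eq by simp
    show "sets M = sigma_sets UNIV (Collect closed)"
      unfolding M.sets_M borel_eq_closed by simp
    show "sets N = sigma_sets UNIV (Collect closed)"
      unfolding N.sets_M borel_eq_closed by simp
    show "range (\<lambda>_. UNIV) \<subseteq> Collect closed" by simp
    show "(\<Union>i. UNIV) = UNIV" by simp
    show "\<And>i. emeasure M UNIV \<noteq> \<infinity>" using Mf.emeasure_finite[of UNIV] by (simp add: M.space_M[symmetric])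
  qed
qed



abbreviation R0 :: "real measure" where "R0 \<equiv> restrict_space lborel {0..<2*pi}"

lemma cis_meas[measurable]: "cis \<in> measurable R0 borel"
proof -
  have "(cis :: real \<Rightarrow> complex) \<in> borel_measurable borel"
    by (intro borel_measurable_continuous_onI continuous_intros)
  then show ?thesis by (intro measurable_restrict_space1) simp
qed

lemma sets_circle[simp, measurable_cong]: "sets circle_measure = sets borel"
  by (simp add: circle_measure_def)

lemma space_circle[simp]: "space circle_measure = UNIV"
  by (simp add: circle_measure_def)

lemma circle_integral:
  fixes g :: "complex \<Rightarrow> 'b::{banach, second_countable_topology}"
  assumes "g \<in> borel_measurable borel"
  shows "integral\<^sup>L circle_measure g = integral\<^sup>L R0 (\<lambda>t. g (cis t))"
  unfolding circle_measure_def using assms by (simp add: integral_distr[OF cis_meas])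

lemma space_R0: "space R0 = {0..<2*pi}"
  by (simp add: space_restrict_space)

lemma emeasure_R0: "emeasure R0 {0..<2*pi} = ennreal (2*pi)"
  by (subst emeasure_restrict_space) auto

lemma emeasure_circle: "emeasure circle_measure UNIV = ennreal (2*pi)"
  unfolding circle_measure_def
  by (subst emeasure_distr[OF cis_meas]) (auto simp: space_R0 emeasure_R0)

lemma finite_circle: "finite_measure circle_measure"
  by (rule finite_measureI) (simp add: emeasure_circle)

lemma measure_circle: "measure circle_measure UNIV = 2*pi"
  using emeasure_circle by (simp add: measure_def)

lemma AE_circle: "AE z in circle_measure. cmod z = 1"
  unfolding circle_measure_def
proof (subst AE_distr_iff[OF cis_meas])
  show "{x \<in> space borel. cmod x = 1} \<in> sets borel" by measurable
  show "AE x in R0. cmod (cis x) = 1" by simp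
qed

lemma pm_measurable[measurable]: "(\<lambda>x::complex. x powi j) \<in> borel_measurable borel"
proof (cases "0 \<le> j")
  case True
  have "(\<lambda>x::complex. x ^ nat j) \<in> borel_measurable borel" by measurable
  then show ?thesis using True by (simp add: power_int_def)
next
  case False
  have "(\<lambda>x::complex. inverse x ^ nat (-j)) \<in> borel_measurable borel" by measurable
  then show ?thesis using False by (simp add: power_int_def)
qed

lemma integrable_circle:
  fixes f :: "complex \<Rightarrow> 'b::{banach, second_countable_topology}"
  assumes f: "f \<in> borel_measurable borel" and B: "\<And>z. cmod z = 1 \<Longrightarrow> norm (f z) \<le> B"
  shows "integrable circle_measure f"
proof (rule Bochner_Integration.integrable_bound[where f="\<lambda>_. B"])
  show "integrable circle_measure (\<lambda>_. B)" using finite_measure.integrable_const[OF finite_circle] .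
  show "f \<in> borel_measurable circle_measure" using f by simp
  show "AE x in circle_measure. norm (f x) \<le> norm B"
    using AE_circle by eventually_elim (use B in force)
qed

lemma R0_integral_lborel:
  fixes f :: "real \<Rightarrow> 'b::{banach, second_countable_topology}"
  assumes f: "f \<in> borel_measurable borel"
  shows "integral\<^sup>L R0 f = integral\<^sup>L lborel (\<lambda>x. indicator {0..2*pi} x *\<^sub>R f x)"
proof -
  have "integral\<^sup>L R0 f = integral\<^sup>L lborel (\<lambda>x. indicator {0..<2*pi} x *\<^sub>R f x)"
    by (rule integral_restrict_space) simp
  also have "\<dots> = integral\<^sup>L lborel (\<lambda>x. indicator {0..2*pi} x *\<^sub>R f x)"
  proof (rule integral_cong_AE)
    show "(\<lambda>x. indicator {0..<2*pi} x *\<^sub>R f x) \<in> borel_measurable lborel" using f by simp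
    show "(\<lambda>x. indicator {0..2*pi} x *\<^sub>R f x) \<in> borel_measurable lborel" using f by simp
    show "AE x in lborel. indicator {0..<2*pi} x *\<^sub>R f x = indicator {0..2*pi} x *\<^sub>R f x"
      using AE_lborel_singleton[of "2*pi"] by eventually_elim (auto simp: indicator_def)
  qed
  finally show ?thesis .
qed

lemma circle_powi: "(\<integral>z. z powi m \<partial>circle_measure) = (if m = 0 then complex_of_real (2*pi) else 0)"
proof -
  have "(\<integral>z. z powi m \<partial>circle_measure) = integral\<^sup>L R0 (\<lambda>t. cis (of_int m * t))"
    by (simp add: circle_integral cis_power_int)
  also have "\<dots> = integral\<^sup>L lborel (\<lambda>x. indicator {0..2*pi} x *\<^sub>R cis (of_int m * x))"
    by (rule R0_integral_lborel) (intro borel_measurable_continuous_onI continuous_intros)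
  also have "\<dots> = (if m = 0 then complex_of_real (2*pi) else 0)"
  proof (cases "m = 0")
    case True
    have "integral\<^sup>L lborel (\<lambda>x. indicator {0..2*pi} x *\<^sub>R cis (of_int m * x)) =
          integral\<^sup>L lborel (\<lambda>x. indicator {0..2*pi} x *\<^sub>R (1::complex))"
      using True by simp
    also have "\<dots> = complex_of_real (2*pi)"
      by (simp add: measure_def scaleR_conv_of_real)
    finally show ?thesis using True by simp
  next
    case False
    define F where "F = (\<lambda>x::real. exp (\<i> * of_int m * of_real x) / (\<i> * of_int m))"
    have d: "(F has_vector_derivative cis (of_int m * x)) (at x within {0..2*pi})" for x
    proof -
      have "((\<lambda>z. exp (\<i> * of_int m * z) / (\<i> * of_int m)) has_field_derivative exp (\<i> * of_int m * of_real x)) (at (of_real x))"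
        using False by (auto intro!: derivative_eq_intros simp: field_simps)
      from has_vector_derivative_real_field[OF this]
      show ?thesis by (simp add: F_def cis_conv_exp mult.assoc)
    qed
    have "integral\<^sup>L lborel (\<lambda>x. indicator {0..2*pi} x *\<^sub>R cis (of_int m * x)) = F (2*pi) - F 0"
      by (rule integral_FTC_atLeastAtMost) (use d in \<open>auto intro!: continuous_intros\<close>)
    also have "F (2*pi) = F 0"
    proof -
      have "exp (\<i> * of_int m * of_real (2*pi)) = cis (2 * pi * of_int m)"
        by (simp add: cis_conv_exp mult_ac)
      also have "\<dots> = 1" by simp
      finally show ?thesis by (simp add: F_def)
    qed
    finally show ?thesis using False by simp
  qed
  finally show ?thesis .
qed



lemma geo_int:
  fixes a :: complex and m :: int
  assumes a: "cmod a < 1"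
  shows "(integral\<^sup>L circle_measure (\<lambda>x. x powi m / (1 - a*x))) = (if m \<le> 0 then complex_of_real (2*pi) * a ^ nat (-m) else 0)"
proof -
  define f where "f i x = a^i * x powi (m + int i)" for i :: nat and x :: complex
  have fm[measurable]: "f i \<in> borel_measurable borel" for i unfolding f_def by measurable
  have fn: "cmod x = 1 \<Longrightarrow> norm (f i x) = cmod a ^ i" for i x
    by (simp add: f_def norm_mult norm_power norm_power_int)
  have fint: "integrable circle_measure (f i)" for i
    by (rule integrable_circle[OF fm, where B="cmod a ^ i"]) (simp add: fn)
  have nint: "integral\<^sup>L circle_measure (\<lambda>x. norm (f i x)) = 2*pi * cmod a ^ i" for i
  proof -
    have "integral\<^sup>L circle_measure (\<lambda>x. norm (f i x)) = integral\<^sup>L circle_measure (\<lambda>x. cmod a ^ i)"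
      by (rule integral_cong_AE) (use AE_circle fn in \<open>auto elim!: eventually_mono\<close>)
    then show ?thesis by (simp add: measure_circle)
  qed
  have sum1: "AE x in circle_measure. summable (\<lambda>i. norm (f i x))"
    using AE_circle by eventually_elim (use a in \<open>simp add: fn summable_geometric\<close>)
  have sum2: "summable (\<lambda>i. integral\<^sup>L circle_measure (\<lambda>x. norm (f i x)))"
    unfolding nint using a by (intro summable_mult summable_geometric) simp
  have eq: "(integral\<^sup>L circle_measure (\<lambda>x. (\<Sum>i. f i x))) = (\<Sum>i. integral\<^sup>L circle_measure (f i))"
    by (rule integral_suminf[OF fint sum1 sum2])
  have sint: "integrable circle_measure (\<lambda>x. \<Sum>i. f i x)"
    by (rule integrable_suminf[OF fint sum1 sum2])
  have fi: "integral\<^sup>L circle_measure (f i) = (if m + int i = 0 then complex_of_real (2*pi) * a^i else 0)" for i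
  proof -
    have "f i = (\<lambda>x. a^i * x powi (m + int i))" by (simp add: f_def fun_eq_iff)
    then show ?thesis by (simp add: circle_powi)
  qed
  have lhs: "(integral\<^sup>L circle_measure (\<lambda>x. x powi m / (1 - a*x))) = (integral\<^sup>L circle_measure (\<lambda>x. (\<Sum>i. f i x)))"
  proof (rule integral_cong_AE)
    show "(\<lambda>x. x powi m / (1 - a * x)) \<in> borel_measurable circle_measure" by simp
    show "(\<lambda>x. \<Sum>i. f i x) \<in> borel_measurable circle_measure"
      using borel_measurable_integrable[OF sint] .
    show "AE x in circle_measure. x powi m / (1 - a * x) = (\<Sum>i. f i x)"
      using AE_circle
    proof eventually_elim
      case (elim x)
      then have v0: "x \<noteq> 0" by auto
      have av: "norm (a*x) < 1" using a elim by (simp add: norm_mult)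
      have "(\<Sum>i. f i x) = (\<Sum>i. x powi m * (a*x)^i)"
        using v0 by (simp add: f_def power_int_add power_mult_distrib mult_ac)
      also have "\<dots> = x powi m * (\<Sum>i. (a*x)^i)"
        by (rule suminf_mult[OF summable_geometric[OF av]])
      also have "\<dots> = x powi m / (1 - a*x)"
        by (simp add: suminf_geometric[OF av])
      finally show ?case by simp
    qed
  qed
  have rhs: "(\<Sum>i. integral\<^sup>L circle_measure (f i)) = (if m \<le> 0 then complex_of_real (2*pi) * a ^ nat (-m) else 0)"
  proof (cases "m \<le> 0")
    case True
    have "(\<lambda>i. integral\<^sup>L circle_measure (f i)) = (\<lambda>i. if i = nat (-m) then complex_of_real (2*pi) * a ^ i else 0)"
      using True by (auto simp: fi fun_eq_iff)
    then have "(\<lambda>i. integral\<^sup>L circle_measure (f i)) sums (complex_of_real (2*pi) * a ^ nat (-m))"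
      using sums_single[of "nat (-m)" "\<lambda>i. complex_of_real (2*pi) * a ^ i"] by simp
    then show ?thesis using True by (simp add: sums_iff)
  next
    case False
    have "(\<lambda>i. integral\<^sup>L circle_measure (f i)) = (\<lambda>i. 0)"
      using False by (auto simp: fi fun_eq_iff)
    then show ?thesis using False by simp
  qed
  show ?thesis using lhs eq rhs by simp
qed

definition pois :: "complex \<Rightarrow> complex \<Rightarrow> real" where
  "pois a x = (1 - (cmod a)\<^sup>2) / (cmod (1 - a*x))\<^sup>2"

lemma pois_decomp:
  fixes a x :: complex
  assumes x: "cmod x = 1" and a: "cmod a < 1"
  shows "complex_of_real (pois a x) = 1/(1-a*x) + cnj (1/(1-a*x)) - 1"
proof -
  define w where "w = 1 - a*x"
  have "cmod (a*x) < 1" using x a by (simp add: norm_mult)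
  then have w0: "w \<noteq> 0" unfolding w_def by auto
  then have cw0: "cnj w \<noteq> 0" by simp
  have vv: "x * cnj x = 1" using complex_norm_square[of x] x by simp
  have nw: "complex_of_real ((cmod w)\<^sup>2) = w * cnj w" by (rule complex_norm_square)
  have na: "complex_of_real ((cmod a)\<^sup>2) = a * cnj a" by (rule complex_norm_square)
  have cw: "cnj w = 1 - cnj a * cnj x" by (simp add: w_def)
  have num: "1 - a * cnj a = cnj w + w - w * cnj w"
  proof -
    have "cnj w + w - w * cnj w = 1 - a * cnj a * (x * cnj x)"
      unfolding cw w_def by (simp add: algebra_simps)
    then show ?thesis using vv by simp
  qed
  have "complex_of_real ((1 - (cmod a)\<^sup>2) / (cmod (1 - a*x))\<^sup>2) = (1 - a * cnj a) / (w * cnj w)"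
    unfolding w_def[symmetric] nw[symmetric] using na by simp
  also have "\<dots> = (cnj w + w - w * cnj w) / (w * cnj w)" by (simp only: num)
  also have "\<dots> = 1/w + 1/cnj w - 1" using w0 cw0 by (simp add: field_simps)
  finally show ?thesis by (simp add: w_def pois_def)
qed

lemma pois_measurable[measurable]: "pois a \<in> borel_measurable borel"
  unfolding pois_def by measurable

lemma pois_bound:
  assumes x: "cmod x = 1" and a: "cmod a < 1"
  shows "0 \<le> pois a x" "pois a x \<le> 1 / (1 - cmod a)\<^sup>2"
proof -
  have "1 - cmod a \<le> 1 - cmod (a*x)" using x by (simp add: norm_mult)
  also have "\<dots> \<le> cmod (1 - a*x)" using norm_triangle_ineq2[of 1 "a*x"] by simp
  finally have d: "1 - cmod a \<le> cmod (1 - a*x)" .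
  have d0: "0 < 1 - cmod a" using a by simp
  have n1: "0 \<le> 1 - (cmod a)\<^sup>2" "1 - (cmod a)\<^sup>2 \<le> 1"
    using a norm_ge_zero[of a] by (auto simp: power2_eq_square mult_le_one)
  show "0 \<le> pois a x" unfolding pois_def using n1 by simp
  have sq: "(1 - cmod a)\<^sup>2 \<le> (cmod (1 - a*x))\<^sup>2"
    using d d0 by (intro power_mono) auto
  have "pois a x \<le> 1 / (cmod (1 - a*x))\<^sup>2"
    unfolding pois_def using n1 by (intro divide_right_mono) auto
  also have "\<dots> \<le> 1 / (1 - cmod a)\<^sup>2"
  proof (rule divide_left_mono)
    show "(1 - cmod a)\<^sup>2 \<le> (cmod (1 - a*x))\<^sup>2" by (rule sq)
    have "0 < cmod (1 - a*x)" using d d0 by linarith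
    then show "0 < (cmod (1 - a*x))\<^sup>2 * (1 - cmod a)\<^sup>2" using d0 by simp
  qed simp
  finally show "pois a x \<le> 1 / (1 - cmod a)\<^sup>2" .
qed

definition rho :: "complex \<Rightarrow> int \<Rightarrow> complex" where
  "rho a k = (if k \<le> 0 then a ^ nat (-k) else cnj a ^ nat k)"

lemma pois_int:
  fixes a :: complex and k :: int
  assumes a: "cmod a < 1"
  shows "(integral\<^sup>L circle_measure (\<lambda>x. x powi k * complex_of_real (pois a x))) = complex_of_real (2*pi) * rho a k"
proof -
  have i1: "integrable circle_measure (\<lambda>x. x powi m / (1 - a*x))" for m
  proof (rule integrable_circle)
    show "(\<lambda>x. x powi m / (1 - a * x)) \<in> borel_measurable borel" by measurable
    fix x :: complex assume x: "cmod x = 1"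
    have "1 - cmod a \<le> cmod (1 - a*x)"
      using x norm_triangle_ineq2[of 1 "a*x"] by (simp add: norm_mult)
    then show "norm (x powi m / (1 - a * x)) \<le> 1 / (1 - cmod a)"
      using x a by (simp add: norm_divide norm_power_int frac_le)
  qed
  have i3: "integrable circle_measure (\<lambda>x. x powi k)"
    by (rule integrable_circle) (auto simp: norm_power_int)
  have "(integral\<^sup>L circle_measure (\<lambda>x. x powi k * complex_of_real (pois a x))) =
        (integral\<^sup>L circle_measure (\<lambda>x. x powi k / (1 - a*x) + cnj (x powi (-k) / (1 - a*x)) - x powi k))"
  proof (rule integral_cong_AE)
    show "(\<lambda>x. x powi k * complex_of_real (pois a x)) \<in> borel_measurable circle_measure" by simp
    have cm: "(cnj :: complex \<Rightarrow> complex) \<in> borel_measurable borel"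
      by (intro borel_measurable_continuous_onI continuous_intros)
    have m1: "(\<lambda>x. x powi (-k) / (1 - a*x)) \<in> borel_measurable borel" by measurable
    have m2[measurable]: "(\<lambda>x. cnj (x powi (-k) / (1 - a*x))) \<in> borel_measurable borel"
      using measurable_compose[OF m1 cm] by (simp add: o_def)
    have "(\<lambda>x. x powi k / (1 - a*x) + cnj (x powi (-k) / (1 - a*x)) - x powi k) \<in> borel_measurable borel"
      by measurable
    then show "(\<lambda>x. x powi k / (1 - a*x) + cnj (x powi (-k) / (1 - a*x)) - x powi k) \<in> borel_measurable circle_measure"
      using measurable_cong_sets[OF sets_circle refl] by blast
    show "AE x in circle_measure. x powi k * complex_of_real (pois a x) = x powi k / (1 - a*x) + cnj (x powi (-k) / (1 - a*x)) - x powi k"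
      using AE_circle
    proof eventually_elim
      case (elim x)
      have ci: "x powi (-1) = cnj x" using circle_inv[OF elim] .
      have "cnj (x powi (-k)) = x powi k"
      proof -
        have v0: "x \<noteq> 0" using elim by auto
        have "cnj (x powi (-k)) = cnj ((x powi (-1)) powi k)"
          by (subst power_int_mult[symmetric]) simp
        also have "\<dots> = cnj (cnj x powi k)" by (simp only: ci)
        also have "\<dots> = x powi k" by (simp add: power_int_def)
        finally show ?thesis .
      qed
      then have e1: "cnj (x powi (-k) / (1 - a*x)) = x powi k * cnj (1/(1-a*x))"
        by (simp add: divide_inverse)
      have e2: "x powi k / (1 - a*x) = x powi k * (1/(1-a*x))" by simp
      show ?case unfolding e1 e2 pois_decomp[OF elim a] by (simp only: ring_distribs mult_1_right)
    qed
  qed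
  also have "\<dots> = (integral\<^sup>L circle_measure (\<lambda>x. x powi k / (1 - a*x))) + cnj (integral\<^sup>L circle_measure (\<lambda>x. x powi (-k) / (1 - a*x)))
       - (integral\<^sup>L circle_measure (\<lambda>x. x powi k))"
  proof -
    have ic: "integrable circle_measure (\<lambda>x. cnj (x powi (-k) / (1 - a*x)))"
      using i1[of "-k"] by (rule integrable_cnj)
    have "(integral\<^sup>L circle_measure (\<lambda>x. x powi k / (1 - a*x) + cnj (x powi (-k) / (1 - a*x)) - x powi k)) =
      (integral\<^sup>L circle_measure (\<lambda>x. x powi k / (1 - a*x) + cnj (x powi (-k) / (1 - a*x)))) - (integral\<^sup>L circle_measure (\<lambda>x. x powi k))"
      by (rule Bochner_Integration.integral_diff[OF Bochner_Integration.integrable_add[OF i1 ic] i3])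
    also have "(integral\<^sup>L circle_measure (\<lambda>x. x powi k / (1 - a*x) + cnj (x powi (-k) / (1 - a*x)))) =
      (integral\<^sup>L circle_measure (\<lambda>x. x powi k / (1 - a*x))) + (integral\<^sup>L circle_measure (\<lambda>x. cnj (x powi (-k) / (1 - a*x))))"
      by (rule Bochner_Integration.integral_add[OF i1 ic])
    also have "(integral\<^sup>L circle_measure (\<lambda>x. cnj (x powi (-k) / (1 - a*x)))) = cnj (integral\<^sup>L circle_measure (\<lambda>x. x powi (-k) / (1 - a*x)))"
      by (rule Bochner_Integration.integral_cnj)
    finally show ?thesis .
  qed
  also have "\<dots> = complex_of_real (2*pi) * rho a k"
    unfolding geo_int[OF a] circle_powi rho_def by auto
  finally show ?thesis .
qed



abbreviation CC :: "(complex \<times> complex) measure" where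
  "CC \<equiv> circle_measure \<Otimes>\<^sub>M circle_measure"

lemma pair_circle: "pair_sigma_finite circle_measure circle_measure"
  unfolding pair_sigma_finite_def using finite_circle finite_measure.axioms(1) by blast

interpretation CC: pair_sigma_finite circle_measure circle_measure
  by (rule pair_circle)

lemma sets_CC[measurable_cong]: "sets CC = sets (borel :: (complex \<times> complex) measure)"
proof -
  have "sets CC = sets (borel \<Otimes>\<^sub>M (borel :: complex measure))"
    by (rule sets_pair_measure_cong) simp_all
  then show ?thesis by (simp only: borel_prod)
qed

lemma space_CC[simp]: "space CC = UNIV"
  by (simp add: space_pair_measure)

lemma meas_pair_borel:
  "f \<in> borel_measurable (borel \<Otimes>\<^sub>M (borel :: complex measure)) \<Longrightarrow> f \<in> borel_measurable (borel :: (complex \<times> complex) measure)"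
  by (simp only: borel_prod)

lemma closed_torus: "closed torus"
  using torus_compact compact_imp_closed by blast

lemma torus_meas_CC: "torus_meas CC"
proof (rule torus_meas.intro)
  show "finite_measure CC" by (rule finite_measure_pair_measure[OF finite_circle finite_circle])
  show "sets CC = sets borel" by (rule sets_CC)
  show "AE z in CC. z \<in> torus"
  proof (rule CC.AE_pair_measure)
    show "{x \<in> space CC. x \<in> torus} \<in> sets CC"
    proof -
      have "torus \<in> sets CC" unfolding sets_CC using closed_torus by (rule borel_closed)
      then show ?thesis by simp
    qed
    show "AE x in circle_measure. AE y in circle_measure. (x, y) \<in> torus"
      using AE_circle
    proof eventually_elim
      case (elim x)
      show ?case using AE_circle by eventually_elim (use elim in \<open>simp add: torus_def\<close>)
    qed
  qed
qed

lemma BC_density_measurable[measurable]: "BC_density s psi \<in> borel_measurable borel"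
proof -
  define h where "h z = cmod (1 - psi * snd z * (if s then cnj (fst z) else fst z))" for z :: "complex \<times> complex"
  have hc: "continuous_on UNIV h" unfolding h_def by (cases s) (auto intro!: continuous_intros)
  have hm[measurable]: "h \<in> borel_measurable borel" by (rule borel_measurable_continuous_onI[OF hc])
  have eq: "BC_density s psi = (\<lambda>z. 1 / (4 * pi\<^sup>2) * (1 - (cmod psi)\<^sup>2) / (h z)\<^sup>2)"
    by (simp add: BC_density_def fun_eq_iff split_beta h_def)
  show ?thesis unfolding eq by measurable
qed

definition cfac :: "bool \<Rightarrow> complex \<Rightarrow> complex" where
  "cfac s u = (if s then cnj u else u)"

lemma dens_eq:
  assumes u: "cmod u = 1"
  shows "BC_density s psi (u,v) = 1 / (4 * pi\<^sup>2) * pois (psi * cfac s u) v"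
proof (cases s)
  case True
  have n: "cmod (psi * cnj u) = cmod psi" using u by (simp add: norm_mult)
  have e: "psi * v * cnj u = psi * cnj u * v" by (simp add: mult_ac)
  show ?thesis unfolding BC_density_def pois_def cfac_def using True by (simp only: n e if_True split times_divide_eq_right)
next
  case False
  have n: "cmod (psi * u) = cmod psi" using u by (simp add: norm_mult)
  have e: "psi * v * u = psi * u * v" by (simp add: mult_ac)
  show ?thesis unfolding BC_density_def pois_def cfac_def using False by (simp only: n e if_False split times_divide_eq_right)
qed

lemma dens_nonneg:
  assumes "cmod psi < 1" shows "0 \<le> BC_density s psi z"
proof -
  have "(cmod psi)\<^sup>2 \<le> 1" using assms norm_ge_zero[of psi] by (simp add: power_le_one)
  then show ?thesis by (auto simp: BC_density_def split_beta')
qed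

lemma rho_cfac:
  assumes u: "cmod u = 1"
  shows "rho (psi * cfac s u) k = rho psi k * u powi (if s then k else -k)"
proof -
  have ci: "cnj u = inverse u" using circle_inv[OF u] by (simp add: power_int_minus)
  show ?thesis
    by (cases "k \<le> 0"; cases s) (auto simp: rho_def cfac_def ci power_mult_distrib power_int_def power_inverse)
qed

lemma mono2_pair: "mono2 j k (u,v) = u powi j * v powi k"
  by (simp add: mono2_def)

definition mcond :: "bool \<Rightarrow> int \<Rightarrow> int \<Rightarrow> bool" where
  "mcond s j k = (if s then j + k = 0 else j = k)"

lemma BC_mom_CC:
  assumes psi: "cmod psi < 1"
  shows "integral\<^sup>L CC (\<lambda>z. BC_density s psi z *\<^sub>R mono2 j k z) = (if mcond s j k then rho psi k else 0)"
proof -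
  interpret T: torus_meas CC by (rule torus_meas_CC)
  define B where "B = 1 / (4 * pi\<^sup>2) * (1 / (1 - cmod psi)\<^sup>2)"
  have gint: "integrable CC (\<lambda>z. BC_density s psi z *\<^sub>R mono2 j k z)"
  proof (rule T.integrable_M[where B=B])
    show "(\<lambda>z. BC_density s psi z *\<^sub>R mono2 j k z) \<in> borel_measurable borel" by measurable
    fix z assume z: "z \<in> torus"
    obtain u v where zz: "z = (u,v)" by (cases z)
    have u: "cmod u = 1" and v: "cmod v = 1" using z by (auto simp: zz torus_def)
    have a: "cmod (psi * cfac s u) < 1" using u psi by (simp add: cfac_def norm_mult)
    have an: "cmod (psi * cfac s u) = cmod psi" using u by (simp add: cfac_def norm_mult)
    have "norm (BC_density s psi z *\<^sub>R mono2 j k z) = \<bar>BC_density s psi z\<bar>"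
      using mono2_bound[OF z] by simp
    also have "\<dots> = 1 / (4 * pi\<^sup>2) * pois (psi * cfac s u) v"
      using pois_bound(1)[OF v a] by (simp add: zz dens_eq[OF u])
    also have "\<dots> \<le> B"
      unfolding B_def using pois_bound(2)[OF v a] an by (intro mult_left_mono) auto
    finally show "norm (BC_density s psi z *\<^sub>R mono2 j k z) \<le> B" .
  qed
  have step1: "integral\<^sup>L CC (\<lambda>z. BC_density s psi z *\<^sub>R mono2 j k z) =
     integral\<^sup>L circle_measure (\<lambda>u. integral\<^sup>L circle_measure (\<lambda>v. BC_density s psi (u,v) *\<^sub>R mono2 j k (u,v)))"
    by (rule CC.integral_fst'[OF gint, symmetric])
  have inner: "integral\<^sup>L circle_measure (\<lambda>v. BC_density s psi (u,v) *\<^sub>R mono2 j k (u,v)) =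
      complex_of_real (1 / (2*pi)) * rho psi k * u powi (j + (if s then k else -k))" if u: "cmod u = 1" for u
  proof -
    have a: "cmod (psi * cfac s u) < 1" using u psi by (simp add: cfac_def norm_mult)
    have u0: "u \<noteq> 0" using u by auto
    have "integral\<^sup>L circle_measure (\<lambda>v. BC_density s psi (u,v) *\<^sub>R mono2 j k (u,v)) =
        integral\<^sup>L circle_measure (\<lambda>v. (u powi j * complex_of_real (1 / (4 * pi\<^sup>2))) * (v powi k * complex_of_real (pois (psi * cfac s u) v)))"
      by (rule Bochner_Integration.integral_cong[OF refl]) (simp add: dens_eq[OF u] mono2_pair scaleR_conv_of_real mult_ac)
    also have "\<dots> = (u powi j * complex_of_real (1 / (4 * pi\<^sup>2))) * (complex_of_real (2*pi) * rho (psi * cfac s u) k)"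
      by (simp only: Bochner_Integration.integral_mult_right_zero pois_int[OF a])
    also have "\<dots> = complex_of_real (1 / (2*pi)) * rho psi k * u powi (j + (if s then k else -k))"
      by (simp add: rho_cfac[OF u] power_int_add[OF disjI1[OF u0]] power2_eq_square field_simps)
    finally show ?thesis .
  qed
  have step2: "integral\<^sup>L circle_measure (\<lambda>u. integral\<^sup>L circle_measure (\<lambda>v. BC_density s psi (u,v) *\<^sub>R mono2 j k (u,v))) =
     integral\<^sup>L circle_measure (\<lambda>u. complex_of_real (1 / (2*pi)) * rho psi k * u powi (j + (if s then k else -k)))"
  proof (rule integral_cong_AE)
    show "(\<lambda>u. integral\<^sup>L circle_measure (\<lambda>v. BC_density s psi (u,v) *\<^sub>R mono2 j k (u,v))) \<in> borel_measurable circle_measure"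
      by (rule borel_measurable_integrable[OF CC.integrable_fst'[OF gint]])
    show "(\<lambda>u. complex_of_real (1 / (2*pi)) * rho psi k * u powi (j + (if s then k else -k))) \<in> borel_measurable circle_measure"
      by simp
    show "AE u in circle_measure. integral\<^sup>L circle_measure (\<lambda>v. BC_density s psi (u,v) *\<^sub>R mono2 j k (u,v)) =
       complex_of_real (1 / (2*pi)) * rho psi k * u powi (j + (if s then k else -k))"
      using AE_circle by eventually_elim (rule inner)
  qed
  have step3: "integral\<^sup>L circle_measure (\<lambda>u. complex_of_real (1 / (2*pi)) * rho psi k * u powi (j + (if s then k else -k)))
     = (if mcond s j k then rho psi k else 0)"
    by (simp only: Bochner_Integration.integral_mult_right_zero circle_powi) (auto simp: mcond_def)
  show ?thesis using step1 step2 step3 by simp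
qed

lemma BC_density_CC_meas[measurable]: "BC_density s psi \<in> borel_measurable CC"
  using BC_density_measurable measurable_cong_sets[OF sets_CC refl] by blast

lemma BC_mom:
  assumes psi: "cmod psi < 1"
  shows "integral\<^sup>L (BC s psi) (mono2 j k) = (if mcond s j k then rho psi k else 0)"
proof -
  have "integral\<^sup>L (BC s psi) (mono2 j k) = integral\<^sup>L CC (\<lambda>z. BC_density s psi z *\<^sub>R mono2 j k z)"
    unfolding BC_def
    by (rule integral_density) (use dens_nonneg[OF psi] mono2_measurable measurable_cong_sets[OF sets_CC refl] in auto)
  then show ?thesis using BC_mom_CC[OF psi] by simp
qed

lemma BC_prob:
  assumes psi: "cmod psi < 1"
  shows "prob_space (BC s psi)"
proof
  interpret T: torus_meas CC by (rule torus_meas_CC)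
  have int: "integrable CC (BC_density s psi)"
  proof (rule T.integrable_M[where B="1 / (4 * pi\<^sup>2) * (1 / (1 - cmod psi)\<^sup>2)"])
    show "BC_density s psi \<in> borel_measurable borel" by measurable
    fix z assume z: "z \<in> torus"
    obtain u v where zz: "z = (u,v)" by (cases z)
    have u: "cmod u = 1" and v: "cmod v = 1" using z by (auto simp: zz torus_def)
    have a: "cmod (psi * cfac s u) < 1" using u psi by (simp add: cfac_def norm_mult)
    have an: "cmod (psi * cfac s u) = cmod psi" using u by (simp add: cfac_def norm_mult)
    have "norm (BC_density s psi z) = 1 / (4 * pi\<^sup>2) * pois (psi * cfac s u) v"
      using pois_bound(1)[OF v a] by (simp add: zz dens_eq[OF u])
    also have "\<dots> \<le> 1 / (4 * pi\<^sup>2) * (1 / (1 - cmod psi)\<^sup>2)"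
      using pois_bound(2)[OF v a] an by (intro mult_left_mono) auto
    finally show "norm (BC_density s psi z) \<le> 1 / (4 * pi\<^sup>2) * (1 / (1 - cmod psi)\<^sup>2)" .
  qed
  have "complex_of_real (integral\<^sup>L CC (BC_density s psi)) = 1"
    using BC_mom_CC[OF psi, of s 0 0] by (simp add: mono2_def mcond_def rho_def scaleR_conv_of_real)
  then have i1: "integral\<^sup>L CC (BC_density s psi) = 1" by (metis of_real_eq_1_iff)
  have "emeasure (BC s psi) (space (BC s psi)) = (\<integral>\<^sup>+ z. ennreal (BC_density s psi z) \<partial>CC)"
  proof -
    have mm: "(\<lambda>z. ennreal (BC_density s psi z)) \<in> borel_measurable CC" by measurable
    have top: "UNIV \<in> sets CC" using sets.top[of CC] by simp
    show ?thesis unfolding BC_def by (simp add: emeasure_density[OF mm top])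
  qed
  also have "\<dots> = ennreal (integral\<^sup>L CC (BC_density s psi))"
    by (rule nn_integral_eq_integral[OF int]) (simp add: dens_nonneg[OF psi])
  finally show "emeasure (BC s psi) (space (BC s psi)) = 1" using i1 by simp
qed

lemma sets_BC: "sets (BC s psi) = sets borel"
  unfolding BC_def using sets_CC by simp

lemma torus_meas_BC:
  assumes psi: "cmod psi < 1"
  shows "torus_meas (BC s psi)"
proof (rule torus_meas.intro)
  show "finite_measure (BC s psi)" using BC_prob[OF psi] unfolding prob_space_def by blast
  show "sets (BC s psi) = sets borel" by (rule sets_BC)
  interpret T: torus_meas CC by (rule torus_meas_CC)
  show "AE z in BC s psi. z \<in> torus"
    unfolding BC_def
    by (subst AE_density) (use T.AE_M in \<open>auto elim!: eventually_mono\<close>)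
qed



lemma powi_prod: "finite A \<Longrightarrow> (\<Prod>i\<in>A. f i) powi j = (\<Prod>i\<in>A. (f i :: complex) powi j)"
  by (induction A rule: finite_induct) (simp_all add: power_int_mult_distrib)

lemma rho_power: "rho w k ^ n = rho (w ^ n) k"
  by (simp add: rho_def complex_cnj_power power_mult[symmetric] mult.commute)

lemma sets_PiM_BC_target: "sets CC = sets (borel \<Otimes>\<^sub>M (borel :: complex measure))"
  by (rule sets_pair_measure_cong) simp_all

lemma main_part:
  fixes n :: nat and w psi :: complex
  assumes n: "n \<ge> 1" and wn: "w ^ n = psi" and psi: "cmod psi < 1"
  shows "distr (PiM {..<n} (\<lambda>_. BC s w)) CC
           (\<lambda>x. (\<Prod>j<n. fst (x j), \<Prod>j<n. snd (x j))) = BC s psi"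
proof -
  have w: "cmod w < 1"
  proof (rule ccontr)
    assume "\<not> cmod w < 1"
    then have "1 \<le> cmod w" by simp
    then have "1 \<le> cmod w ^ n" by (rule one_le_power)
    moreover have "cmod psi = cmod w ^ n" using wn norm_power[of w n] by simp
    ultimately show False using psi by linarith
  qed
  let ?P = "PiM {..<n} (\<lambda>_. BC s w)"
  define Phi where "Phi x = (\<Prod>j<n. fst (x j), \<Prod>j<n. snd (x j))" for x :: "nat \<Rightarrow> complex \<times> complex"
  have pBC: "prob_space (BC s w)" by (rule BC_prob[OF w])
  have pP: "prob_space ?P" by (rule prob_space_PiM) (use pBC in auto)
  have cf: "continuous_on UNIV (fst :: complex \<times> complex \<Rightarrow> complex)" by (intro continuous_intros)
  have cs: "continuous_on UNIV (snd :: complex \<times> complex \<Rightarrow> complex)" by (intro continuous_intros)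
  have fstm[measurable]: "fst \<in> borel_measurable (BC s w)"
    using borel_measurable_continuous_onI[OF cf] measurable_cong_sets[OF sets_BC refl] by blast
  have sndm[measurable]: "snd \<in> borel_measurable (BC s w)"
    using borel_measurable_continuous_onI[OF cs] measurable_cong_sets[OF sets_BC refl] by blast
  have m1: "(\<lambda>x. \<Prod>j<n. fst (x j)) \<in> borel_measurable ?P" by measurable
  have m2: "(\<lambda>x. \<Prod>j<n. snd (x j)) \<in> borel_measurable ?P" by measurable
  have Phim0: "Phi \<in> measurable ?P (borel \<Otimes>\<^sub>M borel)"
    unfolding Phi_def using m1 m2 by (rule measurable_Pair)
  have Phim: "Phi \<in> measurable ?P CC"
    using Phim0 measurable_cong_sets[OF refl sets_PiM_BC_target] by blast
  let ?D = "distr ?P CC Phi"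
  have TD: "torus_meas ?D"
  proof (rule torus_meas.intro)
    show "finite_measure ?D"
      using prob_space.prob_space_distr[OF pP Phim] unfolding prob_space_def by blast
    show "sets ?D = sets borel" using sets_CC by simp
    have ae1: "AE x in ?P. \<forall>j\<in>{..<n}. x j \<in> torus"
    proof (rule AE_finite_allI)
      fix j assume j: "j \<in> {..<n}"
      interpret T: torus_meas "BC s w" by (rule torus_meas_BC[OF w])
      show "AE x in ?P. x j \<in> torus"
        by (rule AE_PiM_component[where M="\<lambda>_. BC s w"]) (use pBC j T.AE_M in auto)
    qed simp
    have "AE x in ?P. Phi x \<in> torus"
      using ae1
    proof eventually_elim
      case (elim x)
      have "cmod (\<Prod>j<n. fst (x j)) = (\<Prod>j<n. cmod (fst (x j)))" by (simp add: prod_norm)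
      also have "\<dots> = 1" using elim by (intro prod.neutral) (auto simp: torus_def)
      finally have 1: "cmod (\<Prod>j<n. fst (x j)) = 1" .
      have "cmod (\<Prod>j<n. snd (x j)) = (\<Prod>j<n. cmod (snd (x j)))" by (simp add: prod_norm)
      also have "\<dots> = 1" using elim by (intro prod.neutral) (auto simp: torus_def)
      finally have 2: "cmod (\<Prod>j<n. snd (x j)) = 1" .
      show ?case using 1 2 by (simp add: Phi_def torus_def)
    qed
    moreover have "{x \<in> space CC. x \<in> torus} \<in> sets CC"
    proof -
      have "torus \<in> sets CC" unfolding sets_CC using closed_torus by (rule borel_closed)
      then show ?thesis by simp
    qed
    ultimately show "AE z in ?D. z \<in> torus"
      by (subst AE_distr_iff[OF Phim]) auto
  qed
  have psf: "product_sigma_finite (\<lambda>_::nat. BC s w)"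
    unfolding product_sigma_finite_def
    using pBC unfolding prob_space_def finite_measure_def by blast
  have mom: "integral\<^sup>L ?D (mono2 j k) = integral\<^sup>L (BC s psi) (mono2 j k)" for j k
  proof -
    have mm: "mono2 j k \<in> borel_measurable CC"
      using mono2_measurable measurable_cong_sets[OF sets_CC refl] by blast
    have "integral\<^sup>L ?D (mono2 j k) = integral\<^sup>L ?P (\<lambda>x. mono2 j k (Phi x))"
      by (rule integral_distr[OF Phim mm])
    also have "\<dots> = integral\<^sup>L ?P (\<lambda>x. \<Prod>i\<in>{..<n}. mono2 j k (x i))"
      by (simp add: Phi_def mono2_def powi_prod prod.distrib)
    also have "\<dots> = (\<Prod>i\<in>{..<n}. integral\<^sup>L (BC s w) (mono2 j k))"
    proof (rule product_sigma_finite.product_integral_prod[OF psf])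
      show "finite {..<n}" by simp
      interpret T: torus_meas "BC s w" by (rule torus_meas_BC[OF w])
      show "\<And>i. i \<in> {..<n} \<Longrightarrow> integrable (BC s w) (mono2 j k)" using T.integrable_mono2 by blast
    qed
    also have "\<dots> = (if mcond s j k then rho w k else 0) ^ n"
      by (simp add: BC_mom[OF w])
    also have "\<dots> = (if mcond s j k then rho psi k else 0)"
      using n by (simp add: rho_power wn)
    also have "\<dots> = integral\<^sup>L (BC s psi) (mono2 j k)"
      by (simp add: BC_mom[OF psi])
    finally show ?thesis .
  qed
  have "?D = BC s psi"
    by (rule torus_meas_eq[OF TD torus_meas_BC[OF psi] mom])
  then show ?thesis unfolding Phi_def .
qed

theorem mainTheorem10:
  fixes s :: bool and psi :: complex
  assumes "cmod psi < 1"
  shows "prob_space (BC s psi) \<and>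
    (\<forall>(n::nat) (w::complex). n \<ge> 1 \<longrightarrow> w ^ n = psi \<longrightarrow>
       distr (PiM {..<n} (\<lambda>_. BC s w)) (circle_measure \<Otimes>\<^sub>M circle_measure)
         (\<lambda>x. (\<Prod>j<n. fst (x j), \<Prod>j<n. snd (x j))) = BC s psi)"
  using BC_prob[OF assms] main_part[OF _ _ assms] by blast


end
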